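(* Let $\lambda$ be a nonzero real number, $x$ a real number with $|\lambda x|<1$, and $p\ge2$ an integer. Then \[ \mathrm{Bel}_{p,\lambda}(x)=\frac{x\,e_{\lambda}^{-1}(x)}{1+\lambda x}\,e_{\lambda}(x,\ 1|1-p)-\frac{\lambda x}{1+\lambda x}\sum_{l=0}^{p-2}\binom{p-1}{l}\mathrm{Bel}_{l+1,\lambda}(x). \]
   Context: For nonzero real $\lambda$: $(1)_{0,\lambda}=1$, $(1)_{n,\lambda}=1(1-\lambda)\cdots(1-(n-1)\lambda)$ for $n\ge1$; $e_\lambda(x)=(1+\lambda x)^{1/\lambda}$ and $e_\lambda^{-1}(x)=(1+\lambda x)^{-1/\lambda}$. For an integer $q\ge1$, $e_{\lambda}(x,\ 1|-q)=\sum_{n=0}^{\infty}\frac{(1)_{n,\lambda}}{n!}(n+1)^{q}x^{n}$. The new type degenerate Bell polynomials $\mathrm{Bel}_{n,\lambda}(x)$ are defined by $e_{\lambda}(xe^{t})\,e_{\lambda}^{-1}(x)=\big(\frac{1+\lambda xe^t}{1+\lambda x}\big)^{1/\lambda}=\sum_{n=0}^{\infty}\mathrm{Bel}_{n,\lambda}(x)\frac{t^{n}}{n!}$. *)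

theory Defs
  imports "HOL-Analysis.Analysis"
begin

definition dfact :: "real \<Rightarrow> nat \<Rightarrow> real" where
  "dfact lam n = (\<Prod>k<n. 1 - real k * lam)"

definition dexp :: "real \<Rightarrow> real \<Rightarrow> real" where
  "dexp lam x = (1 + lam * x) powr (1 / lam)"

definition dexp_inv :: "real \<Rightarrow> real \<Rightarrow> real" where
  "dexp_inv lam x = (1 + lam * x) powr (- 1 / lam)"

text \<open>e_lambda(x, 1 | -q) = sum_n (1)_{n,lambda}/n! (n+1)^q x^n.\<close>
definition dexp_poly :: "real \<Rightarrow> nat \<Rightarrow> real \<Rightarrow> real" where
  "dexp_poly lam q x = (\<Sum>n. dfact lam n / fact n * (real n + 1) ^ q * x ^ n)"

text \<open>Generating function of the new type degenerate Bell polynomials: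
  e_lambda(x e^t) e_lambda^{-1}(x) = ((1 + lambda x e^t)/(1 + lambda x))^(1/lambda).\<close>
definition bel_gf :: "real \<Rightarrow> real \<Rightarrow> real \<Rightarrow> real" where
  "bel_gf lam x t = ((1 + lam * x * exp t) / (1 + lam * x)) powr (1 / lam)"

text \<open>Bel_{n,lambda}(x) is n! times the n-th Taylor coefficient at t = 0,
  i.e. the n-th derivative in t at 0.\<close>
definition Bel :: "nat \<Rightarrow> real \<Rightarrow> real \<Rightarrow> real" where
  "Bel n lam x = (deriv ^^ n) (bel_gf lam x) 0"

end

theory Submission
  imports Defs "HOL-Real_Asymp.Real_Asymp"
begin

lemma dfact_Suc: "dfact lam (Suc k) = dfact lam k * (1 - real k * lam)"
  by (simp add: dfact_def)

lemma summ_aux: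
  assumes r: "r \<ge> 0" and lr: "\<bar>lam\<bar> * r < 1"
  shows "summable (\<lambda>k. \<bar>dfact lam k\<bar> / fact k * real k ^ n * r ^ k)"
proof -
  define L where "L = \<bar>lam\<bar>"
  define c where "c = (1 + L * r) / 2"
  have c1: "c < 1" unfolding c_def L_def using lr by (simp add: field_simps)
  have lim: "(\<lambda>k. (1 + real k * L)/(real k + 1) * ((real k+1)/real k)^n * r) \<longlonglongrightarrow> L*r"
    by real_asymp
  have "L * r < c" unfolding c_def L_def using lr by (simp add: field_simps)
  from order_tendstoD(2)[OF lim this] obtain N where
    N: "\<And>k. k \<ge> N \<Longrightarrow> (1 + real k * L)/(real k + 1) * ((real k+1)/real k)^n * r < c"
    unfolding eventually_sequentially by blast
  show ?thesis
  proof (rule summable_ratio_test[OF c1, of "max N 1"])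
    fix k assume k: "k \<ge> max N 1"
    define f where "f = \<bar>dfact lam k\<bar> / fact k * real k ^ n * r ^ k"
    have f0: "f \<ge> 0" using r by (simp add: f_def)
    have kpos: "real k > 0" using k by simp
    have eq: "\<bar>dfact lam (Suc k)\<bar> / fact (Suc k) * real (Suc k) ^ n * r ^ Suc k
        = (\<bar>1 - real k * lam\<bar> / (real k + 1) * ((real k+1)/real k)^n * r) * f"
    proof -
      have a: "\<bar>dfact lam (Suc k)\<bar> = \<bar>dfact lam k\<bar> * \<bar>1 - real k * lam\<bar>"
        by (simp add: dfact_Suc abs_mult)
      have b: "real (Suc k)^n = ((real k+1)/real k)^n * real k ^n"
        using kpos by (simp add: power_divide add.commute)
      have c: "(fact (Suc k) :: real) = (real k + 1) * fact k" by simp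
      have gen: "\<And>A B K F X. K > 0 \<Longrightarrow> F > 0 \<Longrightarrow> A * B / ((K+1)*F) * (X * K^n) * (r^Suc k)
          = (B/(K+1)*X*r)*(A/F*K^n*r^k)"
        by (simp add: field_simps)
      show ?thesis unfolding a b c f_def by (rule gen) (use kpos in auto)
    qed
    have le1: "\<bar>1 - real k * lam\<bar> \<le> 1 + real k * L"
      unfolding L_def by (metis abs_mult abs_of_nat abs_one abs_triangle_ineq4)
    have "\<bar>1 - real k * lam\<bar> / (real k + 1) * ((real k+1)/real k)^n * r
       \<le> (1 + real k * L)/(real k + 1) * ((real k+1)/real k)^n * r"
      using le1 r kpos by (intro mult_right_mono divide_right_mono) auto
    also have "\<dots> \<le> c" using N[of k] k by simp
    finally have "\<bar>dfact lam (Suc k)\<bar> / fact (Suc k) * real (Suc k) ^ n * r ^ Suc k \<le> c * f"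
      unfolding eq using f0 by (intro mult_right_mono) auto
    then show "norm (\<bar>dfact lam (Suc k)\<bar> / fact (Suc k) * real (Suc k) ^ n * r ^ Suc k)
       \<le> c * norm (\<bar>dfact lam k\<bar> / fact k * real k ^ n * r ^ k)"
      using f0 r by (simp add: f_def)
  qed
qed

definition cc :: "real \<Rightarrow> real \<Rightarrow> nat \<Rightarrow> real" where
  "cc lam x k = dfact lam k * x ^ k / fact k"

definition TT :: "real \<Rightarrow> real \<Rightarrow> nat \<Rightarrow> real \<Rightarrow> real" where
  "TT lam x n t = (\<Sum>k. cc lam x k * real k ^ n * exp (real k * t))"

definition dl :: "real \<Rightarrow> real \<Rightarrow> real" where
  "dl lam x = ln (2 / (1 + \<bar>lam * x\<bar>))"

lemma dl_pos: "\<bar>lam * x\<bar> < 1 \<Longrightarrow> dl lam x > 0"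
  unfolding dl_def by (subst ln_gt_zero_iff) (auto simp: field_simps)

lemma exp_dl: "exp (dl lam x) = 2 / (1 + \<bar>lam * x\<bar>)"
  unfolding dl_def by (subst exp_ln) (auto simp: add_pos_nonneg)

lemma R_bound: assumes "\<bar>lam * x\<bar> < 1"
  shows "\<bar>lam\<bar> * (\<bar>x\<bar> * exp (dl lam x)) < 1"
proof -
  have "\<bar>lam\<bar> * (\<bar>x\<bar> * exp (dl lam x)) = \<bar>lam * x\<bar> * 2 / (1 + \<bar>lam * x\<bar>)"
    by (simp add: exp_dl abs_mult)
  also have "\<dots> < 1" using assms by (simp add: field_simps)
  finally show ?thesis .
qed

lemma term_bound:
  assumes "t \<in> ball 0 (dl lam x)"
  shows "norm (cc lam x k * real k ^ n * exp (real k * t))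
           \<le> \<bar>dfact lam k\<bar> / fact k * real k ^ n * (\<bar>x\<bar> * exp (dl lam x)) ^ k"
proof -
  have t: "t \<le> dl lam x" using assms by (auto simp: dist_norm)
  have "exp (real k * t) = exp t ^ k" by (simp add: exp_of_nat_mult)
  also have "\<dots> \<le> exp (dl lam x) ^ k" using t by (intro power_mono) auto
  finally have e: "exp (real k * t) \<le> exp (dl lam x) ^ k" .
  have "norm (cc lam x k * real k ^ n * exp (real k * t))
      = \<bar>dfact lam k\<bar> / fact k * real k ^ n * (\<bar>x\<bar> ^ k * exp (real k * t))"
    by (simp add: cc_def abs_mult power_abs)
  also have "\<dots> \<le> \<bar>dfact lam k\<bar> / fact k * real k ^ n * (\<bar>x\<bar> ^ k * exp (dl lam x) ^ k)"
    using e by (intro mult_left_mono) auto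
  finally show ?thesis by (simp add: power_mult_distrib)
qed

lemma TT_summable:
  assumes "\<bar>lam * x\<bar> < 1" "t \<in> ball 0 (dl lam x)"
  shows "summable (\<lambda>k. cc lam x k * real k ^ n * exp (real k * t))"
  by (rule summable_comparison_test[OF _ summ_aux[OF _ R_bound[OF assms(1)]]])
     (use term_bound[OF assms(2)] in auto)

lemma TT_deriv:
  assumes "\<bar>lam * x\<bar> < 1" "t \<in> ball 0 (dl lam x)"
  shows "(TT lam x n has_field_derivative TT lam x (Suc n) t) (at t)"
proof -
  have z0: "(0::real) \<in> ball 0 (dl lam x)" using dl_pos[OF assms(1)] by simp
  have "((\<lambda>t. \<Sum>k. cc lam x k * real k ^ n * exp (real k * t)) has_field_derivative
         (\<Sum>k. cc lam x k * real k ^ Suc n * exp (real k * t))) (at t)"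
  proof (rule has_field_derivative_series'(2)[where S = "ball 0 (dl lam x)"
     and f = "\<lambda>k t. cc lam x k * real k ^ n * exp (real k * t)"
     and f' = "\<lambda>k t. cc lam x k * real k ^ Suc n * exp (real k * t)"])
    show "convex (ball (0::real) (dl lam x))" by simp
    show "t \<in> interior (ball 0 (dl lam x))" using assms by simp
    show "(0::real) \<in> ball 0 (dl lam x)" by (rule z0)
    show "summable (\<lambda>k. cc lam x k * real k ^ n * exp (real k * 0))"
      using TT_summable[OF assms(1) z0] .
    show "uniformly_convergent_on (ball 0 (dl lam x))
            (\<lambda>m t. \<Sum>k<m. cc lam x k * real k ^ Suc n * exp (real k * t))"
      by (rule Weierstrass_m_test'[OF term_bound summ_aux[OF _ R_bound[OF assms(1)]]]) auto
    fix k and s :: real assume "s \<in> ball 0 (dl lam x)"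
    show "((\<lambda>t. cc lam x k * real k ^ n * exp (real k * t)) has_field_derivative
           cc lam x k * real k ^ Suc n * exp (real k * s)) (at s within ball 0 (dl lam x))"
      by (auto intro!: derivative_eq_intros)
  qed
  then show ?thesis unfolding TT_def[abs_def] by simp
qed

lemma prod_gch: "lam \<noteq> 0 \<Longrightarrow> lam ^ k * (\<Prod>i=0..<k. 1/lam - real i) = dfact lam k"
proof (induction k)
  case 0 then show ?case by (simp add: dfact_def)
next
  case (Suc k)
  have "lam ^ Suc k * (\<Prod>i=0..<Suc k. 1/lam - real i)
      = (lam ^ k * (\<Prod>i=0..<k. 1/lam - real i)) * (lam * (1/lam - real k))"
    by (simp add: prod.atLeast0_lessThan_Suc)
  also have "\<dots> = dfact lam k * (1 - real k * lam)"
    using Suc by (simp add: field_simps)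
  finally show ?case by (simp add: dfact_Suc)
qed

lemma gch: assumes "lam \<noteq> 0"
  shows "(1/lam gchoose k) * (lam * x * exp t) ^ k = cc lam x k * exp (real k * t)"
proof -
  have "(1/lam gchoose k) * (lam * x * exp t) ^ k
      = (lam ^ k * (\<Prod>i=0..<k. 1/lam - real i)) / fact k * x ^ k * exp t ^ k"
    by (simp add: gbinomial_prod_rev power_mult_distrib)
  also have "\<dots> = cc lam x k * exp (real k * t)"
    by (simp add: prod_gch[OF assms] cc_def exp_of_nat_mult)
  finally show ?thesis .
qed

lemma bel_series:
  assumes "lam \<noteq> 0" "\<bar>lam * x\<bar> < 1" "t \<in> ball 0 (dl lam x)"
  shows "bel_gf lam x t = dexp_inv lam x * TT lam x 0 t"
proof -
  define z where "z = lam * x * exp t"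
  have t: "t \<le> dl lam x" using assms by (auto simp: dist_norm)
  have "\<bar>z\<bar> = \<bar>lam * x\<bar> * exp t" by (simp add: z_def abs_mult)
  also have "\<dots> \<le> \<bar>lam * x\<bar> * exp (dl lam x)" using t by (intro mult_left_mono) auto
  also have "\<dots> = \<bar>lam * x\<bar> * 2 / (1 + \<bar>lam * x\<bar>)" by (simp add: exp_dl)
  also have "\<dots> < 1" using assms by (simp add: field_simps)
  finally have z1: "\<bar>z\<bar> < 1" .
  have "(\<lambda>k. (1/lam gchoose k) * z ^ k) sums (1 + z) powr (1/lam)"
    by (rule gen_binomial_real[OF z1])
  then have "(\<lambda>k. cc lam x k * real k ^ 0 * exp (real k * t)) sums (1 + z) powr (1/lam)"
    by (simp add: z_def gch[OF assms(1)])
  then have T: "TT lam x 0 t = (1 + z) powr (1/lam)"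
    unfolding TT_def by (rule sums_unique[symmetric])
  have a1: "1 + lam * x > 0" using assms by linarith
  have z0: "1 + z > 0" using z1 by linarith
  have "bel_gf lam x t = (1 + z) powr (1/lam) / (1 + lam * x) powr (1/lam)"
    unfolding bel_gf_def z_def[symmetric]
    using a1 z0 by (simp add: powr_divide)
  also have "\<dots> = dexp_inv lam x * TT lam x 0 t"
    unfolding T dexp_inv_def by (simp add: powr_minus divide_inverse)
  finally show ?thesis .
qed

lemma iter_deriv:
  assumes "lam \<noteq> 0" "\<bar>lam * x\<bar> < 1"
  shows "\<forall>t\<in>ball 0 (dl lam x). (deriv ^^ n) (bel_gf lam x) t = dexp_inv lam x * TT lam x n t"
proof (induction n)
  case 0 then show ?case using bel_series[OF assms] by simp
next
  case (Suc n)
  show ?case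
  proof
    fix t :: real assume t: "t \<in> ball 0 (dl lam x)"
    have "((\<lambda>s. dexp_inv lam x * TT lam x n s) has_field_derivative
            dexp_inv lam x * TT lam x (Suc n) t) (at t)"
      by (rule DERIV_cmult[OF TT_deriv[OF assms(2) t]])
    then have "((deriv ^^ n) (bel_gf lam x) has_field_derivative
            dexp_inv lam x * TT lam x (Suc n) t) (at t)"
      by (rule has_field_derivative_transform_within_open[OF _ _ t]) (use Suc in auto)
    then show "(deriv ^^ Suc n) (bel_gf lam x) t = dexp_inv lam x * TT lam x (Suc n) t"
      by (simp add: DERIV_imp_deriv)
  qed
qed

lemma Bel_eq:
  assumes "lam \<noteq> 0" "\<bar>lam * x\<bar> < 1"
  shows "Bel n lam x = dexp_inv lam x * (\<Sum>k. cc lam x k * real k ^ n)"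
proof -
  have "(0::real) \<in> ball 0 (dl lam x)" using dl_pos[OF assms(2)] by simp
  then show ?thesis using iter_deriv[OF assms, of n] by (simp add: Bel_def TT_def)
qed

lemma S_sums:
  assumes "\<bar>lam * x\<bar> < 1"
  shows "(\<lambda>k. cc lam x k * real k ^ n) sums (\<Sum>k. cc lam x k * real k ^ n)"
proof -
  have "(0::real) \<in> ball 0 (dl lam x)" using dl_pos[OF assms] by simp
  from TT_summable[OF assms this, of n] show ?thesis by (simp add: summable_sums)
qed

theorem mainTheorem14:
  fixes lam x :: real and p :: nat
  assumes "lam \<noteq> 0" and "\<bar>lam * x\<bar> < 1" and "p \<ge> 2"
  shows "Bel p lam x =
           x * dexp_inv lam x / (1 + lam * x) * dexp_poly lam (p - 1) x
           - lam * x / (1 + lam * x) * (\<Sum>l = 0..p - 2. of_nat ((p - 1) choose l) * Bel (l + 1) lam x)"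
proof -
  obtain m where p: "p = Suc (Suc m)" using assms(3) by (metis add_2_eq_Suc le_Suc_ex)
  define q where "q = Suc m"
  define E where "E = dexp_inv lam x"
  define a where "a = lam * x"
  define S where "S = (\<lambda>j. \<Sum>k. cc lam x k * real k ^ j)"
  have Ssums: "\<And>j. (\<lambda>k. cc lam x k * real k ^ j) sums S j"
    unfolding S_def by (rule S_sums[OF assms(2)])
  have Bel: "\<And>j. Bel j lam x = E * S j" unfolding E_def S_def by (rule Bel_eq[OF assms(1,2)])
  have binom: "\<And>k::nat. (real k + 1) ^ q = (\<Sum>l\<le>q. of_nat (q choose l) * real k ^ l)"
    by (subst binomial_ring) simp
  define A where "A = (\<Sum>l\<le>q. of_nat (q choose l) * S (l + 1))"
  define P where "P = (\<Sum>l\<le>q. of_nat (q choose l) * S l)"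
  have gA: "(\<lambda>k. cc lam x k * real k * (real k + 1) ^ q) sums A"
  proof -
    have "(\<lambda>k. \<Sum>l\<le>q. of_nat (q choose l) * (cc lam x k * real k ^ (l + 1))) sums A"
      unfolding A_def by (intro sums_sum sums_mult Ssums)
    moreover have "\<And>k. (\<Sum>l\<le>q. of_nat (q choose l) * (cc lam x k * real k ^ (l + 1)))
        = cc lam x k * real k * (real k + 1) ^ q"
      by (simp add: binom sum_distrib_left mult_ac)
    ultimately show ?thesis by simp
  qed
  have uP: "(\<lambda>n. dfact lam n / fact n * (real n + 1) ^ q * x ^ n) sums P"
  proof -
    have "(\<lambda>k. \<Sum>l\<le>q. of_nat (q choose l) * (cc lam x k * real k ^ l)) sums P"
      unfolding P_def by (intro sums_sum sums_mult Ssums)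
    moreover have "\<And>k. (\<Sum>l\<le>q. of_nat (q choose l) * (cc lam x k * real k ^ l))
        = dfact lam k / fact k * (real k + 1) ^ q * x ^ k"
      by (simp add: binom sum_distrib_left cc_def mult_ac)
    ultimately show ?thesis by simp
  qed
  have dp: "dexp_poly lam (p - 1) x = P"
    unfolding dexp_poly_def using uP p q_def by (simp add: sums_iff)
  have xP1: "(\<lambda>n. x * (dfact lam n / fact n * (real n + 1) ^ q * x ^ n)) sums (x * P)"
    by (rule sums_mult[OF uP])
  have f1: "(\<lambda>n. cc lam x (Suc n) * real (Suc n) ^ (q + 1)) sums S (q + 1)"
    using Ssums[of "q+1"] by (subst sums_Suc_iff) simp
  have xP2: "(\<lambda>n. cc lam x (Suc n) * real (Suc n) ^ (q + 1) + a * (cc lam x n * real n * (real n + 1) ^ q))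
      sums (S (q + 1) + a * A)"
    by (intro sums_add f1 sums_mult gA)
  have eqt: "\<And>n. x * (dfact lam n / fact n * (real n + 1) ^ q * x ^ n)
      = cc lam x (Suc n) * real (Suc n) ^ (q + 1) + a * (cc lam x n * real n * (real n + 1) ^ q)"
  proof -
    fix n
    have gen: "\<And>D F K Y X. F \<noteq> 0 \<Longrightarrow> K + 1 \<noteq> 0 \<Longrightarrow> x * (D / F * Y * X)
        = D * (1 - K * lam) * (x * X) / ((K + 1) * F) * ((K + 1) * Y) + lam * x * (D * X / F * K * Y)"
    proof -
      fix D F K Y X :: real assume F: "F \<noteq> 0" and K: "K + 1 \<noteq> 0"
      have "D * (1 - K * lam) * (x * X) / ((K + 1) * F) * ((K + 1) * Y) = D * (1 - K * lam) * (x * X) * Y / F"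
        using K by (simp add: divide_simps)
      moreover have "x * (D / F * Y * X) = D * (1 - K * lam) * (x * X) * Y / F + lam * x * (D * X / F * K * Y)"
        using F by (simp add: field_simps)
      ultimately show "x * (D / F * Y * X)
        = D * (1 - K * lam) * (x * X) / ((K + 1) * F) * ((K + 1) * Y) + lam * x * (D * X / F * K * Y)"
        by simp
    qed
    have f: "(fact (Suc n) :: real) = (real n + 1) * fact n" by simp
    have r: "real (Suc n) ^ (q + 1) = (real n + 1) * (real n + 1) ^ q" by (simp add: add.commute)
    show "x * (dfact lam n / fact n * (real n + 1) ^ q * x ^ n)
      = cc lam x (Suc n) * real (Suc n) ^ (q + 1) + a * (cc lam x n * real n * (real n + 1) ^ q)"
      unfolding cc_def a_def dfact_Suc f r power_Suc
      by (rule gen) auto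
  qed
  have xP: "x * P = S (q + 1) + a * A"
    using xP1 xP2 unfolding eqt by (rule sums_unique2)
  have AB: "A = (\<Sum>l = 0..m. of_nat (q choose l) * S (l + 1)) + S (q + 1)"
    unfolding A_def q_def by (simp add: atMost_atLeast0 sum.atLeast0_atMost_Suc)
  have a1: "1 + a > 0" using assms(2) unfolding a_def by linarith
  have "x * E / (1 + a) * P - a / (1 + a) * (\<Sum>l = 0..m. of_nat (q choose l) * (E * S (l + 1)))
      = E / (1 + a) * (x * P - a * (\<Sum>l = 0..m. of_nat (q choose l) * S (l + 1)))"
  proof -
    define B where "B = (\<Sum>l = 0..m. of_nat (q choose l) * S (l + 1))"
    have sB: "(\<Sum>l = 0..m. of_nat (q choose l) * (E * S (l + 1))) = E * B"
      unfolding B_def by (simp add: sum_distrib_left mult_ac)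
    have gen: "\<And>c. c \<noteq> 0 \<Longrightarrow> x * E / c * P - a / c * (E * B) = E / c * (x * P - a * B)"
      by (simp add: field_simps)
    show ?thesis unfolding sB B_def[symmetric] using a1 by (intro gen) simp
  qed
  also have "\<dots> = E * S (q + 1)"
    using a1 unfolding xP AB by (simp add: field_simps)
  finally show ?thesis
    using p dp unfolding Bel E_def[symmetric] a_def[symmetric] q_def[symmetric]
    by (simp add: q_def)
qed
end
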